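(* For all even integers $n\ge0$ and real numbers $a\ge1$, $x\in(-1,1)$, we have $\Lambda_{n,a}(x)\ge1$. Equality holds if and only if $n=0$, or $n=2$, $a=1$, $x=-1/2$.
   Context: $U_j$ denotes the Chebyshev polynomial of the second kind of degree $j$, i.e. $U_j(\cos t)=\sin((j+1)t)/\sin t$. For a real number $a$ and integers $0\le m$, $\binom{m+a}{m}=\frac{(a+1)(a+2)\cdots(a+m)}{m!}$ (equal to $1$ when $m=0$). For an integer $n\ge0$, $\Lambda_{n,a}(x)=\sum_{j=0}^n\binom{n+a-j}{n-j}U_j(x)$. *)

theory Defs
  imports "HOL-Analysis.Analysis"
begin

text \<open>Chebyshev polynomials of the second kind, by the standard recurrence
  U_0 = 1, U_1 = 2x, U_(j+2) = 2x U_(j+1) - U_j, so that U_j(cos t) = sin((j+1)t)/sin t.\<close>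
fun chebU :: "nat \<Rightarrow> real \<Rightarrow> real" where
  "chebU 0 x = 1"
| "chebU (Suc 0) x = 2 * x"
| "chebU (Suc (Suc j)) x = 2 * x * chebU (Suc j) x - chebU j x"

text \<open>binom(m+a, m) = (a+1)...(a+m)/m!, i.e. the generalized binomial (a+m) gchoose m.\<close>
definition binomR :: "nat \<Rightarrow> real \<Rightarrow> real" where
  "binomR m a = (a + real m) gchoose m"

definition Lambda :: "nat \<Rightarrow> real \<Rightarrow> real \<Rightarrow> real" where
  "Lambda n a x = (\<Sum>j=0..n. binomR (n - j) a * chebU j x)"

end

theory Submission
  imports Defs
begin
lemma cosrec: "cos ((y::real) + t) = 2 * cos t * cos y - cos (y - t)"
  by (simp add: cos_add cos_diff)

lemma chebU_diff_cos:
  "chebU (Suc (Suc m)) (cos t) - chebU m (cos t) = 2 * cos (real (Suc (Suc m)) * t) \<and>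
   chebU (Suc (Suc (Suc m))) (cos t) - chebU (Suc m) (cos t) = 2 * cos (real (Suc (Suc (Suc m))) * t)"
proof (induction m)
  case 0
  have "cos (2*t) = 2 * cos t ^ 2 - 1" by (rule cos_double_cos)
  moreover have "cos (3*t) = 4 * cos t ^ 3 - 3 * cos t" by (rule cos_treble_cos)
  ultimately show ?case by (simp add: power2_eq_square power3_eq_cube algebra_simps)
next
  case (Suc m)
  have r: "cos (real (Suc (Suc (Suc (Suc m)))) * t) = 2 * cos t * cos (real (Suc (Suc (Suc m))) * t) - cos (real (Suc (Suc m)) * t)"
    using cosrec[of "real (Suc (Suc (Suc m))) * t" t] by (simp add: algebra_simps)
  have "chebU (Suc (Suc (Suc (Suc m)))) (cos t) - chebU (Suc (Suc m)) (cos t)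
     = 2 * cos t * (chebU (Suc (Suc (Suc m))) (cos t) - chebU (Suc m) (cos t)) - (chebU (Suc (Suc m)) (cos t) - chebU m (cos t))"
    by (simp add: algebra_simps)
  also have "\<dots> = 2 * cos t * (2 * cos (real (Suc (Suc (Suc m))) * t)) - 2 * cos (real (Suc (Suc m)) * t)"
    using Suc.IH by simp
  also have "\<dots> = 2 * cos (real (Suc (Suc (Suc (Suc m)))) * t)" using r by simp
  finally show ?case using Suc.IH by simp
qed

lemma chebU_diff_le:
  assumes "-1 \<le> x" "x \<le> 1"
  shows "chebU (Suc (Suc m)) x - chebU m x \<le> 2"
proof -
  have "x = cos (arccos x)" using assms by (simp add: cos_arccos)
  then have "chebU (Suc (Suc m)) x - chebU m x = 2 * cos (real (Suc (Suc m)) * arccos x)"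
    using chebU_diff_cos[of m "arccos x"] by metis
  then show ?thesis by simp
qed

lemma chebU_lt:
  assumes "-1 < x" "x < 1" "m \<ge> 1"
  shows "chebU m x < real m + 1"
  using assms(3)
proof (induction m rule: nat_less_induct)
  case (1 m)
  show ?case
  proof (cases "m \<le> 2")
    case True
    then have "m = 1 \<or> m = 2" using 1 by auto
    then show ?thesis
    proof
      assume "m = 1" then show ?thesis using assms by simp
    next
      assume "m = 2"
      have "\<bar>x\<bar> < 1" using assms by auto
      then have "x^2 < 1" by (simp add: abs_square_less_1)
      then have "x*x < 1" by (simp add: power2_eq_square)
      then show ?thesis using \<open>m=2\<close> by (simp add: numeral_2_eq_2)
    qed
  next
    case False
    define k where "k = m - 2"
    have k: "m = Suc (Suc k)" "k \<ge> 1" using False unfolding k_def by auto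
    have "chebU k x < real k + 1" using 1 k by auto
    moreover have "chebU (Suc (Suc k)) x - chebU k x \<le> 2" using assms by (intro chebU_diff_le) auto
    ultimately show ?thesis using k by simp
  qed
qed
lemma conv_partial:
  fixes h g :: "nat \<Rightarrow> real"
  shows "(\<Sum>j\<le>n. (\<Sum>i\<le>n-j. h i) * g j) = (\<Sum>k\<le>n. h (n-k) * (\<Sum>j\<le>k. g j))"
proof (induction n)
  case 0
  then show ?case by simp
next
  case (Suc n)
  have L: "(\<Sum>j\<le>Suc n. (\<Sum>i\<le>Suc n-j. h i) * g j)
      = (\<Sum>j\<le>n. (\<Sum>i\<le>n-j. h i) * g j) + (\<Sum>j\<le>Suc n. h (Suc n - j) * g j)"
  proof -
    have "(\<Sum>j\<le>Suc n. (\<Sum>i\<le>Suc n-j. h i) * g j)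
        = (\<Sum>j\<le>n. (\<Sum>i\<le>Suc n-j. h i) * g j) + h 0 * g (Suc n)" by simp
    also have "(\<Sum>j\<le>n. (\<Sum>i\<le>Suc n-j. h i) * g j)
        = (\<Sum>j\<le>n. (\<Sum>i\<le>n-j. h i) * g j + h (Suc n - j) * g j)"
      by (intro sum.cong refl) (simp add: Suc_diff_le algebra_simps)
    finally show ?thesis by (simp add: sum.distrib)
  qed
  have R: "(\<Sum>k\<le>Suc n. h (Suc n-k) * (\<Sum>j\<le>k. g j))
      = (\<Sum>k\<le>n. h (n-k) * (\<Sum>j\<le>k. g j)) + (\<Sum>j\<le>Suc n. h (Suc n - j) * g j)"
  proof -
    have "(\<Sum>k\<le>Suc n. h (Suc n-k) * (\<Sum>j\<le>k. g j))
       = h (Suc n) * g 0 + (\<Sum>k\<le>n. h (n-k) * (\<Sum>j\<le>Suc k. g j))"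
      by (subst sum.atMost_Suc_shift) simp
    also have "(\<Sum>k\<le>n. h (n-k) * (\<Sum>j\<le>Suc k. g j))
       = (\<Sum>k\<le>n. h (n-k) * (\<Sum>j\<le>k. g j)) + (\<Sum>k\<le>n. h (n-k) * g (Suc k))"
      by (simp add: sum.distrib algebra_simps)
    also have "(\<Sum>j\<le>Suc n. h (Suc n - j) * g j) = h (Suc n) * g 0 + (\<Sum>k\<le>n. h (n-k) * g (Suc k))"
      by (subst sum.atMost_Suc_shift) simp
    ultimately show ?thesis by simp
  qed
  show ?case using L R Suc.IH by simp
qed

definition TT :: "real \<Rightarrow> nat \<Rightarrow> real" where "TT x k = (\<Sum>j\<le>k. chebU j x)"
definition SS :: "real \<Rightarrow> nat \<Rightarrow> real" where "SS x k = (\<Sum>i\<le>k. TT x i)"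

lemma TT_eq: "2*(1-x) * TT x k = 1 + chebU k x - chebU (Suc k) x"
proof (induction k)
  case 0 then show ?case by (simp add: TT_def)
next
  case (Suc k)
  have "TT x (Suc k) = TT x k + chebU (Suc k) x" by (simp add: TT_def)
  then show ?case using Suc by (simp add: algebra_simps)
qed

lemma SS_eq: "2*(1-x) * SS x k = real k + 2 - chebU (Suc k) x"
proof (induction k)
  case 0 then show ?case using TT_eq[of x 0] by (simp add: SS_def)
next
  case (Suc k)
  have "SS x (Suc k) = SS x k + TT x (Suc k)" by (simp add: SS_def)
  then show ?case using Suc TT_eq[of x "Suc k"] by (simp add: algebra_simps)
qed

lemma SS_pos: assumes "-1 < x" "x < 1" shows "SS x k > 0"
proof -
  have "chebU (Suc k) x < real (Suc k) + 1" using assms by (intro chebU_lt) auto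
  then have "2*(1-x) * SS x k > 0" using SS_eq[of x k] by simp
  then show ?thesis using assms by (simp add: zero_less_mult_iff)
qed

lemma U_odd_le: assumes "-1 \<le> x" "x \<le> 1" shows "chebU (2*k+1) x \<le> 2*real k + 2*x"
proof (induction k)
  case 0 then show ?case by simp
next
  case (Suc k)
  have "2 * Suc k + 1 = Suc (Suc (2*k+1))" by simp
  moreover have "chebU (Suc (Suc (2*k+1))) x - chebU (2*k+1) x \<le> 2" using assms by (rule chebU_diff_le)
  ultimately show ?case using Suc by simp
qed

lemma U5: assumes "x < 1" shows "chebU 5 x < 4 + 2*x"
proof -
  have e: "4 + 2*x - chebU 5 x = 4*(1-x)*(8*(x^2+x/2-3/16)^2 + (x+3/4)^2 + 5/32)"
    by (simp add: eval_nat_numeral algebra_simps power2_eq_square)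
  have "8*(x^2+x/2-3/16)^2 + (x+3/4)^2 + 5/32 > 0"
    by (intro add_nonneg_pos) auto
  then have "4*(1-x)*(8*(x^2+x/2-3/16)^2 + (x+3/4)^2 + 5/32) > 0" using assms by simp
  then show ?thesis using e by linarith
qed

lemma U3: "2 + 2*x - chebU 3 x = 2*(1-x)*(2*x+1)^2"
  by (simp add: eval_nat_numeral algebra_simps power2_eq_square)

lemma U_odd_lt: assumes "-1 < x" "x < 1" "k \<ge> 2" shows "chebU (2*k+1) x < 2*real k + 2*x"
  using assms(3)
proof (induction k rule: dec_induct)
  case base
  then show ?case using U5[OF assms(2)] by (simp add: numeral_eq_Suc)
next
  case (step k)
  have "2 * Suc k + 1 = Suc (Suc (2*k+1))" by simp
  moreover have "chebU (Suc (Suc (2*k+1))) x - chebU (2*k+1) x \<le> 2" using assms by (intro chebU_diff_le) auto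
  ultimately show ?case using step by simp
qed

lemma SS_even:
  assumes "even n" "-1 < x" "x < 1"
  shows "SS x n \<ge> 1 \<and> (SS x n = 1 \<longleftrightarrow> (n = 0 \<or> (n = 2 \<and> x = -1/2)))"
proof -
  obtain k where k: "n = 2*k" using assms(1) by auto
  have p: "2*(1-x) > 0" using assms by simp
  have key: "2*(1-x) * (SS x n - 1) = 2*real k + 2*x - chebU (2*k+1) x"
    using SS_eq[of x n] k by (simp add: algebra_simps)
  have le: "chebU (2*k+1) x \<le> 2*real k + 2*x" using assms by (intro U_odd_le) auto
  then have "(2*(1-x)) * (SS x n - 1) \<ge> 0" using key by linarith
  then have "SS x n - 1 \<ge> 0" using p by (simp add: zero_le_mult_iff)
  then have ge: "SS x n \<ge> 1" by simp
  have "SS x n = 1 \<longleftrightarrow> chebU (2*k+1) x = 2*real k + 2*x" using key p by auto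
  also have "\<dots> \<longleftrightarrow> (n = 0 \<or> (n = 2 \<and> x = -1/2))"
  proof (cases "k \<ge> 2")
    case True
    then show ?thesis using U_odd_lt[OF assms(2,3) True] k by auto
  next
    case False
    then have "k = 0 \<or> k = 1" by auto
    then show ?thesis
    proof
      assume "k = 0" then show ?thesis using k by simp
    next
      assume k1: "k = 1"
      have "chebU 3 x = 2 + 2*x \<longleftrightarrow> (2*x+1)^2 = 0" using U3[of x] assms by auto
      also have "\<dots> \<longleftrightarrow> x = -1/2" by (auto simp: algebra_simps)
      finally show ?thesis using k k1 by (simp add: numeral_eq_Suc)
    qed
  qed
  finally show ?thesis using ge by simp
qed
lemma poch_nonneg: "(y::real) \<ge> 0 \<Longrightarrow> pochhammer y m \<ge> 0"
  by (induction m) (auto simp: pochhammer_Suc)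

theorem theorem4p1:
  fixes n :: nat and a x :: real
  assumes "even n" and "a \<ge> 1" and "-1 < x" and "x < 1"
  shows "Lambda n a x \<ge> 1 \<and>
         (Lambda n a x = 1 \<longleftrightarrow> (n = 0 \<or> (n = 2 \<and> a = 1 \<and> x = -1/2)))"
proof -
  define w where "w m = (a - 2 + real m) gchoose m" for m
  define b where "b m = (a - 1 + real m) gchoose m" for m
  have bR: "binomR m a = (\<Sum>i\<le>m. b i)" for m
    unfolding binomR_def b_def using gbinomial_parallel_sum[of "a-1" m]
    by (simp add: algebra_simps)
  have bw: "b m = (\<Sum>i\<le>m. w i)" for m
    unfolding w_def b_def using gbinomial_parallel_sum[of "a-2" m]
    by (simp add: algebra_simps)
  have Lam: "Lambda n a x = (\<Sum>k\<le>n. w (n-k) * SS x k)"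
  proof -
    have "Lambda n a x = (\<Sum>j\<le>n. (\<Sum>i\<le>n-j. b i) * chebU j x)"
      unfolding Lambda_def by (simp add: atLeast0AtMost bR)
    also have "\<dots> = (\<Sum>k\<le>n. b (n-k) * TT x k)"
      unfolding TT_def by (rule conv_partial)
    also have "\<dots> = (\<Sum>k\<le>n. (\<Sum>i\<le>n-k. w i) * TT x k)" by (simp add: bw)
    also have "\<dots> = (\<Sum>k\<le>n. w (n-k) * SS x k)"
      unfolding SS_def by (rule conv_partial)
    finally show ?thesis .
  qed
  have wp: "w m = pochhammer (a - 1) m / fact m" for m
    unfolding w_def by (simp add: gbinomial_pochhammer' algebra_simps)
  have w0: "w 0 = 1" by (simp add: wp)
  have wnn: "w m \<ge> 0" for m using assms(2) by (simp add: wp poch_nonneg)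
  have split: "Lambda n a x = SS x n + (\<Sum>k<n. w (n-k) * SS x k)"
    using Lam by (simp add: lessThan_Suc_atMost[symmetric] w0)
  define R where "R = (\<Sum>k<n. w (n-k) * SS x k)"
  have Rnn: "R \<ge> 0" unfolding R_def
    using SS_pos[OF assms(3,4)] wnn by (intro sum_nonneg) (simp add: less_imp_le)
  have Rpos: "R > 0" if "n \<ge> 1" "a > 1"
  proof -
    have "w n > 0" using that by (simp add: wp pochhammer_pos)
    then have "0 < w (n-0) * SS x 0" using SS_pos[OF assms(3,4)] by simp
    also have "\<dots> \<le> R" unfolding R_def
      using that SS_pos[OF assms(3,4)] wnn
      by (intro member_le_sum) (auto simp: less_imp_le)
    finally show ?thesis .
  qed
  have R1: "R = 0" if "a = 1"
  proof -
    have "w m = 0" if m1: "m \<ge> 1" for m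
    proof -
      obtain j where "m = Suc j" using m1 by (cases m) auto
      then show ?thesis using \<open>a = 1\<close> by (simp add: wp pochhammer_rec)
    qed
    then show ?thesis unfolding R_def by (intro sum.neutral) auto
  qed
  have S: "SS x n \<ge> 1 \<and> (SS x n = 1 \<longleftrightarrow> (n = 0 \<or> (n = 2 \<and> x = -1/2)))"
    using SS_even assms by blast
  have L: "Lambda n a x = SS x n + R" using split R_def by simp
  show ?thesis
  proof
    show "Lambda n a x \<ge> 1" using L S Rnn by simp
  next
    show "Lambda n a x = 1 \<longleftrightarrow> (n = 0 \<or> (n = 2 \<and> a = 1 \<and> x = -1/2))"
    proof
      assume h: "Lambda n a x = 1"
      then have "SS x n = 1" "R = 0" using L S Rnn by auto
      then have n: "n = 0 \<or> (n = 2 \<and> x = -1/2)" using S by blast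
      show "n = 0 \<or> (n = 2 \<and> a = 1 \<and> x = -1/2)"
      proof (cases "n = 0")
        case False
        then have "\<not> a > 1" using Rpos \<open>R = 0\<close> by fastforce
        then show ?thesis using n assms(2) by auto
      qed simp
    next
      assume h: "n = 0 \<or> (n = 2 \<and> a = 1 \<and> x = -1/2)"
      then have "SS x n = 1" using S by auto
      moreover have "R = 0" using h R1 unfolding R_def by auto
      ultimately show "Lambda n a x = 1" using L by simp
    qed
  qed
qed
end
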